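(* There exists a regular monoid $M$ such that all its Schützenberger groups (equivalently, all its maximal subgroups) are residually finite, and its right action on its $\mathcal{L}$-classes and its left action on its $\mathcal{R}$-classes are residually finite, but $M$ itself is not residually finite.
   Context: A monoid $M$ is regular if for every $x$ there is $y$ with $xyx=x$. Residual finiteness of a monoid: distinct elements are separated by homomorphisms to finite monoids. Green's relations: $x\mathcal{R}y$ iff $xM=yM$, $x\mathcal{L}y$ iff $Mx=My$, $\mathcal{H}=\mathcal{R}\cap\mathcal{L}$. $M$ acts on the right on $M/\mathcal{L}$ by $L_x\cdot m=L_{xm}$ and on the left on $M/\mathcal{R}$ by $m\cdot R_x=R_{mx}$; an action is residually finite if any two distinct points are separated by an action homomorphism onto an action on a finite set. For an $\mathcal{H}$-class $H$, $\mathrm{Stab}(H)=\{s\in M:Hs=H\}$, $\sigma=\{(x,y):hx=hy\ \forall h\in H\}$, and the Schützenberger group is $\Gamma(H)=\mathrm{Stab}(H)/\sigma$. *)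

theory Defs
  imports "HOL-Algebra.Group"
begin

definition mon_hom :: "('a, 'c) monoid_scheme \<Rightarrow> ('b, 'd) monoid_scheme \<Rightarrow> ('a \<Rightarrow> 'b) set" where
  "mon_hom M N = {h. h \<in> carrier M \<rightarrow> carrier N \<and>
     (\<forall>x\<in>carrier M. \<forall>y\<in>carrier M. h (x \<otimes>\<^bsub>M\<^esub> y) = h x \<otimes>\<^bsub>N\<^esub> h y) \<and>
     h \<one>\<^bsub>M\<^esub> = \<one>\<^bsub>N\<^esub>}"

definition regular_monoid :: "('a, 'c) monoid_scheme \<Rightarrow> bool" where
  "regular_monoid M \<longleftrightarrow>
     (\<forall>x\<in>carrier M. \<exists>y\<in>carrier M. x \<otimes>\<^bsub>M\<^esub> y \<otimes>\<^bsub>M\<^esub> x = x)"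

(* Residual finiteness of a monoid: distinct elements are separated by
   homomorphisms to finite monoids (finite monoids are taken, up to isomorphism,
   with carrier a subset of nat). *)
definition res_finite_monoid :: "('a, 'c) monoid_scheme \<Rightarrow> bool" where
  "res_finite_monoid M \<longleftrightarrow>
     (\<forall>x\<in>carrier M. \<forall>y\<in>carrier M. x \<noteq> y \<longrightarrow>
        (\<exists>(N :: nat monoid) h. monoid N \<and> finite (carrier N) \<and>
            h \<in> mon_hom M N \<and> h x \<noteq> h y))"

definition res_finite_group :: "('a, 'c) monoid_scheme \<Rightarrow> bool" where
  "res_finite_group G \<longleftrightarrow>
     (\<forall>x\<in>carrier G. \<forall>y\<in>carrier G. x \<noteq> y \<longrightarrow>
        (\<exists>(K :: nat monoid) h. group K \<and> finite (carrier K) \<and>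
            h \<in> hom G K \<and> h x \<noteq> h y))"

definition Rcl :: "('a, 'c) monoid_scheme \<Rightarrow> 'a \<Rightarrow> 'a set" where
  "Rcl M x = {y \<in> carrier M. (\<lambda>m. y \<otimes>\<^bsub>M\<^esub> m) ` carrier M = (\<lambda>m. x \<otimes>\<^bsub>M\<^esub> m) ` carrier M}"

definition Lcl :: "('a, 'c) monoid_scheme \<Rightarrow> 'a \<Rightarrow> 'a set" where
  "Lcl M x = {y \<in> carrier M. (\<lambda>m. m \<otimes>\<^bsub>M\<^esub> y) ` carrier M = (\<lambda>m. m \<otimes>\<^bsub>M\<^esub> x) ` carrier M}"

definition Hcl :: "('a, 'c) monoid_scheme \<Rightarrow> 'a \<Rightarrow> 'a set" where
  "Hcl M x = Rcl M x \<inter> Lcl M x"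

definition Lact :: "('a, 'c) monoid_scheme \<Rightarrow> 'a set \<Rightarrow> 'a \<Rightarrow> 'a set" where
  "Lact M L m = Lcl M ((SOME x. x \<in> L) \<otimes>\<^bsub>M\<^esub> m)"

definition Ract :: "('a, 'c) monoid_scheme \<Rightarrow> 'a \<Rightarrow> 'a set \<Rightarrow> 'a set" where
  "Ract M m R = Rcl M (m \<otimes>\<^bsub>M\<^esub> (SOME x. x \<in> R))"

(* A right action (X, act) of M on a set X is residually finite if any two distinct
   points are separated by an action homomorphism onto a right action of M
   on a finite set (finite sets taken as subsets of nat). *)
definition res_finite_right_action ::
    "('a, 'c) monoid_scheme \<Rightarrow> 'x set \<Rightarrow> ('x \<Rightarrow> 'a \<Rightarrow> 'x) \<Rightarrow> bool" where
  "res_finite_right_action M X act \<longleftrightarrow>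
     (\<forall>p\<in>X. \<forall>q\<in>X. p \<noteq> q \<longrightarrow>
        (\<exists>(Y :: nat set) (b :: nat \<Rightarrow> 'a \<Rightarrow> nat) (\<phi> :: 'x \<Rightarrow> nat).
           finite Y \<and>
           (\<forall>y\<in>Y. \<forall>m\<in>carrier M. b y m \<in> Y) \<and>
           (\<forall>y\<in>Y. b y \<one>\<^bsub>M\<^esub> = y) \<and>
           (\<forall>y\<in>Y. \<forall>m\<in>carrier M. \<forall>n\<in>carrier M. b (b y m) n = b y (m \<otimes>\<^bsub>M\<^esub> n)) \<and>
           \<phi> ` X = Y \<and>
           (\<forall>x\<in>X. \<forall>m\<in>carrier M. \<phi> (act x m) = b (\<phi> x) m) \<and>
           \<phi> p \<noteq> \<phi> q))"

definition res_finite_left_action ::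
    "('a, 'c) monoid_scheme \<Rightarrow> 'x set \<Rightarrow> ('a \<Rightarrow> 'x \<Rightarrow> 'x) \<Rightarrow> bool" where
  "res_finite_left_action M X act \<longleftrightarrow>
     (\<forall>p\<in>X. \<forall>q\<in>X. p \<noteq> q \<longrightarrow>
        (\<exists>(Y :: nat set) (b :: 'a \<Rightarrow> nat \<Rightarrow> nat) (\<phi> :: 'x \<Rightarrow> nat).
           finite Y \<and>
           (\<forall>y\<in>Y. \<forall>m\<in>carrier M. b m y \<in> Y) \<and>
           (\<forall>y\<in>Y. b \<one>\<^bsub>M\<^esub> y = y) \<and>
           (\<forall>y\<in>Y. \<forall>m\<in>carrier M. \<forall>n\<in>carrier M. b m (b n y) = b (m \<otimes>\<^bsub>M\<^esub> n) y) \<and>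
           \<phi> ` X = Y \<and>
           (\<forall>x\<in>X. \<forall>m\<in>carrier M. \<phi> (act m x) = b m (\<phi> x)) \<and>
           \<phi> p \<noteq> \<phi> q))"

definition Stab :: "('a, 'c) monoid_scheme \<Rightarrow> 'a set \<Rightarrow> 'a set" where
  "Stab M H = {s \<in> carrier M. (\<lambda>h. h \<otimes>\<^bsub>M\<^esub> s) ` H = H}"

definition sigmaH :: "('a, 'c) monoid_scheme \<Rightarrow> 'a set \<Rightarrow> ('a \<times> 'a) set" where
  "sigmaH M H = {(x, y). x \<in> Stab M H \<and> y \<in> Stab M H \<and>
                         (\<forall>h\<in>H. h \<otimes>\<^bsub>M\<^esub> x = h \<otimes>\<^bsub>M\<^esub> y)}"

definition Schutz :: "('a, 'c) monoid_scheme \<Rightarrow> 'a set \<Rightarrow> 'a set monoid" where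
  "Schutz M H = \<lparr> carrier = Stab M H // sigmaH M H,
      mult = (\<lambda>A B. sigmaH M H `` {(SOME a. a \<in> A) \<otimes>\<^bsub>M\<^esub> (SOME b. b \<in> B)}),
      one = sigmaH M H `` {\<one>\<^bsub>M\<^esub>} \<rparr>"

end

theory Submission
  imports Defs "HOL-Library.Nat_Bijection"
begin

definition enc :: "nat \<Rightarrow> nat \<Rightarrow> nat \<Rightarrow> nat" where
  "enc i g l = Suc (2 * prod_encode (i, l) + g)"
definition fi :: "nat \<Rightarrow> nat" where "fi n = fst (prod_decode ((n - 1) div 2))"
definition fl :: "nat \<Rightarrow> nat" where "fl n = snd (prod_decode ((n - 1) div 2))"
definition fg :: "nat \<Rightarrow> nat" where "fg n = (n - 1) mod 2"

lemma enc_pos[simp]: "enc i g l > 0" "enc i g l \<noteq> 0" by (auto simp: enc_def)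
lemma fi_enc[simp]: "g < 2 \<Longrightarrow> fi (enc i g l) = i"
  by (simp add: enc_def fi_def)
lemma fl_enc[simp]: "g < 2 \<Longrightarrow> fl (enc i g l) = l"
  by (simp add: enc_def fl_def)
lemma fg_enc[simp]: "g < 2 \<Longrightarrow> fg (enc i g l) = g"
  by (simp add: enc_def fg_def)
lemma fg_lt[simp]: "fg n < 2" by (simp add: fg_def)
lemma enc_surj: "n > 0 \<Longrightarrow> enc (fi n) (fg n) (fl n) = n"
  by (simp add: enc_def fi_def fl_def fg_def)
lemma enc_eq_iff: "g < 2 \<Longrightarrow> g' < 2 \<Longrightarrow> enc i g l = enc i' g' l' \<longleftrightarrow> i = i' \<and> g = g' \<and> l = l'"
  by (metis fg_enc fi_enc fl_enc)

definition ind :: "bool \<Rightarrow> nat" where "ind b = (if b then 1 else 0)"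

definition mul :: "nat \<Rightarrow> nat \<Rightarrow> nat" where
  "mul x y = (if x = 0 then y else if y = 0 then x else
      enc (fi x) ((fg x + fg y + ind (fl x = fi y)) mod 2) (fl y))"

lemma mul_0[simp]: "mul 0 y = y" "mul x 0 = x" by (auto simp: mul_def)
lemma mul_pos_pos: "x > 0 \<Longrightarrow> y > 0 \<Longrightarrow> mul x y = enc (fi x) ((fg x + fg y + ind (fl x = fi y)) mod 2) (fl y)"
  by (simp add: mul_def)
lemma mul_gt0: "x > 0 \<or> y > 0 \<Longrightarrow> mul x y > 0"
  by (auto simp: mul_def)
lemma fl_mul: "y > 0 \<Longrightarrow> fl (mul x y) = fl y"
  by (auto simp: mul_def)
lemma fi_mul: "x > 0 \<Longrightarrow> fi (mul x y) = fi x"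
  by (auto simp: mul_def)
lemma fg_mul: "x > 0 \<Longrightarrow> y > 0 \<Longrightarrow> fg (mul x y) = (fg x + fg y + ind (fl x = fi y)) mod 2"
  by (auto simp: mul_def)

lemma mul_assoc: "mul (mul x y) z = mul x (mul y z)"
proof (cases "x = 0 \<or> y = 0 \<or> z = 0")
  case True then show ?thesis by auto
next
  case False
  then have p: "x > 0" "y > 0" "z > 0" by auto
  have a: "mul x y > 0" "mul y z > 0" using p by (auto intro: mul_gt0)
  have e: "(fg (mul x y) + fg z + ind (fl (mul x y) = fi z)) mod 2 = (fg x + fg (mul y z) + ind (fl x = fi (mul y z))) mod 2"
  proof -
    have "fg x = 0 \<or> fg x = 1" "fg y = 0 \<or> fg y = 1" "fg z = 0 \<or> fg z = 1"
      using fg_lt[of x] fg_lt[of y] fg_lt[of z] by linarith+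
    then show ?thesis using p by (auto simp: fi_mul fl_mul fg_mul ind_def)
  qed
  show ?thesis
    unfolding mul_pos_pos[OF a(1) p(3)] mul_pos_pos[OF p(1) a(2)]
    using p e by (simp add: fi_mul fl_mul)
qed

definition MM :: "nat monoid" where "MM = \<lparr>carrier = UNIV, mult = mul, one = 0\<rparr>"

lemma MM_simps[simp]: "carrier MM = UNIV" "mult MM = mul" "one MM = 0"
  by (auto simp: MM_def)

lemma monoid_MM: "monoid MM"
  by (rule monoidI) (auto simp: mul_assoc)

lemma Lcl_self: "w \<in> carrier M \<Longrightarrow> w \<in> Lcl M w" by (simp add: Lcl_def)
lemma Lcl_eq: "z \<in> Lcl M w \<Longrightarrow> Lcl M z = Lcl M w" by (simp add: Lcl_def)
lemma Rcl_self: "w \<in> carrier M \<Longrightarrow> w \<in> Rcl M w" by (simp add: Rcl_def)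
lemma Rcl_eq: "z \<in> Rcl M w \<Longrightarrow> Rcl M z = Rcl M w" by (simp add: Rcl_def)

lemma right_act_generic:
  fixes M :: "('a,'c) monoid_scheme"
  assumes mon: "monoid M"
    and key: "\<And>z m. z \<in> carrier M \<Longrightarrow> m \<in> carrier M \<Longrightarrow> m \<noteq> \<one>\<^bsub>M\<^esub> \<Longrightarrow> Lcl M (z \<otimes>\<^bsub>M\<^esub> m) = Lcl M m"
    and nz: "\<And>m n. m \<in> carrier M \<Longrightarrow> n \<in> carrier M \<Longrightarrow> n \<noteq> \<one>\<^bsub>M\<^esub> \<Longrightarrow> m \<otimes>\<^bsub>M\<^esub> n \<noteq> \<one>\<^bsub>M\<^esub>"
  shows "res_finite_right_action M (Lcl M ` carrier M) (Lact M)"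
  unfolding res_finite_right_action_def
proof (intro ballI impI)
  let ?X = "Lcl M ` carrier M"
  fix p q assume pq: "p \<in> ?X" "q \<in> ?X" "p \<noteq> q"
  define \<phi> where "\<phi> = (\<lambda>x. if x = p then 0 else if x = q then 1 else (2::nat))"
  define b where "b = (\<lambda>y m. if m = \<one>\<^bsub>M\<^esub> then y else \<phi> (Lcl M m))"
  have fin: "finite (\<phi> ` ?X)"
    by (rule finite_subset[of _ "{0,1,2}"]) (auto simp: \<phi>_def)
  have eqv: "\<phi> (Lact M x m) = b (\<phi> x) m" if x: "x \<in> ?X" and m: "m \<in> carrier M" for x m
  proof -
    obtain w where w: "w \<in> carrier M" "x = Lcl M w" using x by auto
    define z where "z = (SOME z. z \<in> x)"
    have "z \<in> x" unfolding z_def by (rule someI[of _ w]) (simp add: w Lcl_self)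
    then have zc: "z \<in> carrier M" "Lcl M z = x" using w by (auto simp: Lcl_def)
    have la: "Lact M x m = Lcl M (z \<otimes>\<^bsub>M\<^esub> m)" by (simp add: Lact_def z_def)
    show ?thesis
    proof (cases "m = \<one>\<^bsub>M\<^esub>")
      case True then show ?thesis using zc mon la by (simp add: b_def monoid.r_one)
    next
      case False then show ?thesis using zc m key la by (simp add: b_def)
    qed
  qed
  show "\<exists>(Y :: nat set) (b :: nat \<Rightarrow> 'a \<Rightarrow> nat) (\<phi> :: 'a set \<Rightarrow> nat).
           finite Y \<and>
           (\<forall>y\<in>Y. \<forall>m\<in>carrier M. b y m \<in> Y) \<and>
           (\<forall>y\<in>Y. b y \<one>\<^bsub>M\<^esub> = y) \<and>
           (\<forall>y\<in>Y. \<forall>m\<in>carrier M. \<forall>n\<in>carrier M. b (b y m) n = b y (m \<otimes>\<^bsub>M\<^esub> n)) \<and>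
           \<phi> ` ?X = Y \<and>
           (\<forall>x\<in>?X. \<forall>m\<in>carrier M. \<phi> (Lact M x m) = b (\<phi> x) m) \<and>
           \<phi> p \<noteq> \<phi> q"
  proof (intro exI conjI)
    show "finite (\<phi> ` ?X)" by (rule fin)
    show "\<forall>y\<in>\<phi> ` ?X. \<forall>m\<in>carrier M. b y m \<in> \<phi> ` ?X" by (auto simp: b_def)
    show "\<forall>y\<in>\<phi> ` ?X. b y \<one>\<^bsub>M\<^esub> = y" by (simp add: b_def)
    show "\<forall>y\<in>\<phi> ` ?X. \<forall>m\<in>carrier M. \<forall>n\<in>carrier M. b (b y m) n = b y (m \<otimes>\<^bsub>M\<^esub> n)"
      using mon key nz by (auto simp: b_def monoid.r_one)
    show "\<phi> ` ?X = \<phi> ` ?X" ..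
    show "\<forall>x\<in>?X. \<forall>m\<in>carrier M. \<phi> (Lact M x m) = b (\<phi> x) m" using eqv by blast
    show "\<phi> p \<noteq> \<phi> q" using pq by (simp add: \<phi>_def)
  qed
qed

lemma left_act_generic:
  fixes M :: "('a,'c) monoid_scheme"
  assumes mon: "monoid M"
    and key: "\<And>z m. z \<in> carrier M \<Longrightarrow> m \<in> carrier M \<Longrightarrow> m \<noteq> \<one>\<^bsub>M\<^esub> \<Longrightarrow> Rcl M (m \<otimes>\<^bsub>M\<^esub> z) = Rcl M m"
    and nz: "\<And>m n. m \<in> carrier M \<Longrightarrow> n \<in> carrier M \<Longrightarrow> m \<noteq> \<one>\<^bsub>M\<^esub> \<Longrightarrow> m \<otimes>\<^bsub>M\<^esub> n \<noteq> \<one>\<^bsub>M\<^esub>"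
  shows "res_finite_left_action M (Rcl M ` carrier M) (Ract M)"
  unfolding res_finite_left_action_def
proof (intro ballI impI)
  let ?X = "Rcl M ` carrier M"
  fix p q assume pq: "p \<in> ?X" "q \<in> ?X" "p \<noteq> q"
  define \<phi> where "\<phi> = (\<lambda>x. if x = p then 0 else if x = q then 1 else (2::nat))"
  define b where "b = (\<lambda>m y. if m = \<one>\<^bsub>M\<^esub> then y else \<phi> (Rcl M m))"
  have fin: "finite (\<phi> ` ?X)"
    by (rule finite_subset[of _ "{0,1,2}"]) (auto simp: \<phi>_def)
  have eqv: "\<phi> (Ract M m x) = b m (\<phi> x)" if x: "x \<in> ?X" and m: "m \<in> carrier M" for x m
  proof -
    obtain w where w: "w \<in> carrier M" "x = Rcl M w" using x by auto
    define z where "z = (SOME z. z \<in> x)"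
    have "z \<in> x" unfolding z_def by (rule someI[of _ w]) (simp add: w Rcl_self)
    then have zc: "z \<in> carrier M" "Rcl M z = x" using w by (auto simp: Rcl_def)
    have la: "Ract M m x = Rcl M (m \<otimes>\<^bsub>M\<^esub> z)" by (simp add: Ract_def z_def)
    show ?thesis
    proof (cases "m = \<one>\<^bsub>M\<^esub>")
      case True then show ?thesis using zc mon la by (simp add: b_def monoid.l_one)
    next
      case False then show ?thesis using zc m key la by (simp add: b_def)
    qed
  qed
  show "\<exists>(Y :: nat set) (b :: 'a \<Rightarrow> nat \<Rightarrow> nat) (\<phi> :: 'a set \<Rightarrow> nat).
           finite Y \<and>
           (\<forall>y\<in>Y. \<forall>m\<in>carrier M. b m y \<in> Y) \<and>
           (\<forall>y\<in>Y. b \<one>\<^bsub>M\<^esub> y = y) \<and>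
           (\<forall>y\<in>Y. \<forall>m\<in>carrier M. \<forall>n\<in>carrier M. b m (b n y) = b (m \<otimes>\<^bsub>M\<^esub> n) y) \<and>
           \<phi> ` ?X = Y \<and>
           (\<forall>x\<in>?X. \<forall>m\<in>carrier M. \<phi> (Ract M m x) = b m (\<phi> x)) \<and>
           \<phi> p \<noteq> \<phi> q"
  proof (intro exI conjI)
    show "finite (\<phi> ` ?X)" by (rule fin)
    show "\<forall>y\<in>\<phi> ` ?X. \<forall>m\<in>carrier M. b m y \<in> \<phi> ` ?X" by (auto simp: b_def)
    show "\<forall>y\<in>\<phi> ` ?X. b \<one>\<^bsub>M\<^esub> y = y" by (simp add: b_def)
    show "\<forall>y\<in>\<phi> ` ?X. \<forall>m\<in>carrier M. \<forall>n\<in>carrier M. b m (b n y) = b (m \<otimes>\<^bsub>M\<^esub> n) y"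
      using mon key nz by (auto simp: b_def monoid.l_one)
    show "\<phi> ` ?X = \<phi> ` ?X" ..
    show "\<forall>x\<in>?X. \<forall>m\<in>carrier M. \<phi> (Ract M m x) = b m (\<phi> x)" using eqv by blast
    show "\<phi> p \<noteq> \<phi> q" using pq by (simp add: \<phi>_def)
  qed
qed


lemma rimg: "w > 0 \<Longrightarrow> (\<lambda>m. mul w m) ` UNIV = {v. v > 0 \<and> fi v = fi w}"
proof (intro equalityI subsetI)
  fix v assume w: "w > 0" and "v \<in> (\<lambda>m. mul w m) ` UNIV"
  then show "v \<in> {v. v > 0 \<and> fi v = fi w}" using mul_gt0 fi_mul by auto
next
  fix v assume w: "w > 0" and v: "v \<in> {v. v > 0 \<and> fi v = fi w}"
  define u where "u = enc (fl w) ((fg v + fg w + 1) mod 2) (fl v)"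
  have "mul w u = enc (fi w) ((fg w + (fg v + fg w + 1) mod 2 + 1) mod 2) (fl v)"
    using w by (simp add: u_def mul_pos_pos ind_def)
  also have "(fg w + (fg v + fg w + 1) mod 2 + 1) mod 2 = fg v" using fg_lt[of v] fg_lt[of w] fg_lt[of x] by (auto simp: less_2_cases_iff)
  finally have "mul w u = v" using v enc_surj[of v] by simp
  then show "v \<in> (\<lambda>m. mul w m) ` UNIV" by (metis rangeI)
qed

lemma limg: "w > 0 \<Longrightarrow> (\<lambda>m. mul m w) ` UNIV = {v. v > 0 \<and> fl v = fl w}"
proof (intro equalityI subsetI)
  fix v assume w: "w > 0" and "v \<in> (\<lambda>m. mul m w) ` UNIV"
  then show "v \<in> {v. v > 0 \<and> fl v = fl w}" using mul_gt0 fl_mul by auto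
next
  fix v assume w: "w > 0" and v: "v \<in> {v. v > 0 \<and> fl v = fl w}"
  define u where "u = enc (fi v) ((fg v + fg w + 1) mod 2) (fi w)"
  have "mul u w = enc (fi v) (((fg v + fg w + 1) mod 2 + fg w + 1) mod 2) (fl w)"
    using w by (simp add: u_def mul_pos_pos ind_def)
  also have "((fg v + fg w + 1) mod 2 + fg w + 1) mod 2 = fg v" using fg_lt[of v] fg_lt[of w] fg_lt[of x] by (auto simp: less_2_cases_iff)
  finally have "mul u w = v" using v enc_surj[of v] by simp
  then show "v \<in> (\<lambda>m. mul m w) ` UNIV" by (metis rangeI)
qed

lemma key_L: "m \<noteq> 0 \<Longrightarrow> Lcl MM (mul z m) = Lcl MM m"
proof -
  assume m: "m \<noteq> 0"
  have "(\<lambda>u. mul u (mul z m)) ` UNIV = (\<lambda>u. mul u m) ` UNIV"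
    using m by (simp add: limg mul_gt0 fl_mul)
  then show ?thesis by (simp add: Lcl_def)
qed

lemma key_R: "m \<noteq> 0 \<Longrightarrow> Rcl MM (mul m z) = Rcl MM m"
proof -
  assume m: "m \<noteq> 0"
  have "(\<lambda>u. mul (mul m z) u) ` UNIV = (\<lambda>u. mul m u) ` UNIV"
    using m by (simp add: rimg mul_gt0 fi_mul)
  then show ?thesis by (simp add: Rcl_def)
qed

lemma right_MM: "res_finite_right_action MM (Lcl MM ` carrier MM) (Lact MM)"
  by (rule right_act_generic) (auto simp: monoid_MM key_L mul_gt0 intro: gr0I)

lemma left_MM: "res_finite_left_action MM (Rcl MM ` carrier MM) (Ract MM)"
  by (rule left_act_generic) (auto simp: monoid_MM key_R mul_gt0)

lemma regular_MM: "regular_monoid MM"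
  unfolding regular_monoid_def
proof (intro ballI)
  fix x assume "x \<in> carrier MM"
  show "\<exists>y\<in>carrier MM. x \<otimes>\<^bsub>MM\<^esub> y \<otimes>\<^bsub>MM\<^esub> x = x"
  proof (cases "x = 0")
    case True then show ?thesis by auto
  next
    case False
    define y where "y = enc (fl x) (fg x) (fi x)"
    have xy: "mul x y = enc (fi x) ((fg x + fg x + 1) mod 2) (fi x)"
      using False by (simp add: y_def mul_pos_pos ind_def)
    have "mul (mul x y) x = enc (fi x) (((fg x + fg x + 1) mod 2 + fg x + 1) mod 2) (fl x)"
      using False unfolding xy by (simp add: mul_pos_pos ind_def)
    also have "((fg x + fg x + 1) mod 2 + fg x + 1) mod 2 = fg x" using fg_lt[of v] fg_lt[of w] fg_lt[of x] by (auto simp: less_2_cases_iff)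
    finally show ?thesis using False enc_surj[of x] by auto
  qed
qed

lemma not_rf_MM: "\<not> res_finite_monoid MM"
proof
  assume rf: "res_finite_monoid MM"
  have ne: "enc 0 1 0 \<noteq> enc 0 0 0" by (simp add: enc_eq_iff)
  have ex: "\<exists>(N :: nat monoid) h. monoid N \<and> finite (carrier N) \<and>
            h \<in> mon_hom MM N \<and> h (enc 0 1 0) \<noteq> h (enc 0 0 0)"
    using rf[unfolded res_finite_monoid_def, rule_format, of "enc 0 1 0" "enc 0 0 0"] ne by simp
  then obtain N :: "nat monoid" and h where N: "finite (carrier N)" "h \<in> mon_hom MM N"
      and hne: "h (enc 0 1 0) \<noteq> h (enc 0 0 0)"
    by blast
  have hc: "h \<in> UNIV \<rightarrow> carrier N" and hm: "\<And>x y. h (mul x y) = h x \<otimes>\<^bsub>N\<^esub> h y"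
    using N(2) by (auto simp: mon_hom_def)
  let ?f = "\<lambda>l. h (enc 0 0 l)"
  have "finite (range ?f)" using hc N(1) by (rule_tac finite_subset[of _ "carrier N"]) auto
  then have "\<not> inj ?f" using finite_imageD infinite_UNIV_nat by blast
  then obtain a c where ac: "a \<noteq> c" "?f a = ?f c" unfolding inj_def by blast
  have e1: "mul (enc 0 0 a) (enc a 0 0) = enc 0 1 0" by (simp add: mul_pos_pos ind_def)
  have e2: "mul (enc 0 0 c) (enc a 0 0) = enc 0 0 0" using ac by (simp add: mul_pos_pos ind_def)
  have "h (enc 0 1 0) = h (enc 0 0 0)"
    by (metis e1 e2 hm ac(2))
  then show False using hne by simp
qed


definition HH :: "nat \<Rightarrow> nat \<Rightarrow> nat set" where "HH i l = {z. z > 0 \<and> fi z = i \<and> fl z = l}"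
definition SS :: "nat \<Rightarrow> nat set" where "SS l = {s. s = 0 \<or> (s > 0 \<and> fl s = l)}"
definition vv :: "nat \<Rightarrow> nat \<Rightarrow> nat" where
  "vv l s = (if s = 0 then 0 else (fg s + ind (l = fi s)) mod 2)"
definition cls :: "nat \<Rightarrow> nat \<Rightarrow> nat set" where "cls l a = {b \<in> SS l. vv l b = vv l a}"

lemma vv_lt[simp]: "vv l s < 2" by (simp add: vv_def)

lemma Rcl_MM: "x > 0 \<Longrightarrow> Rcl MM x = {z. z > 0 \<and> fi z = fi x}"
proof -
  assume x: "x > 0"
  have img0: "(\<lambda>m. mul 0 m) ` UNIV = UNIV" by simp
  have "z \<in> Rcl MM x \<longleftrightarrow> z > 0 \<and> fi z = fi x" for z
  proof (cases "z = 0")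
    case True
    then show ?thesis using x by (auto simp: Rcl_def rimg img0)
  next
    case False
    then have "z \<in> {v. v > 0 \<and> fi v = fi z}" by simp
    then show ?thesis using x False by (auto simp: Rcl_def rimg)
  qed
  then show ?thesis by blast
qed

lemma Lcl_MM: "x > 0 \<Longrightarrow> Lcl MM x = {z. z > 0 \<and> fl z = fl x}"
proof -
  assume x: "x > 0"
  have img0: "(\<lambda>m. mul m 0) ` UNIV = UNIV" by simp
  have "z \<in> Lcl MM x \<longleftrightarrow> z > 0 \<and> fl z = fl x" for z
  proof (cases "z = 0")
    case True
    then show ?thesis using x by (auto simp: Lcl_def limg img0)
  next
    case False
    then have "z \<in> {v. v > 0 \<and> fl v = fl z}" by simp
    then show ?thesis using x False by (auto simp: Lcl_def limg)
  qed
  then show ?thesis by blast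
qed

lemma Hcl_MM: "x > 0 \<Longrightarrow> Hcl MM x = HH (fi x) (fl x)"
  by (auto simp: Hcl_def Rcl_MM Lcl_MM HH_def)

lemma Rcl_MM0: "Rcl MM 0 \<subseteq> {0}"
proof
  fix z assume z: "z \<in> Rcl MM 0"
  show "z \<in> {0}"
  proof (rule ccontr)
    assume "z \<notin> {0}"
    then have "z > 0" by simp
    moreover have "(\<lambda>m. mul z m) ` UNIV = UNIV" using z by (simp add: Rcl_def)
    ultimately have "(0::nat) \<in> {v. v > 0 \<and> fi v = fi z}" using rimg[of z] by simp
    then show False by simp
  qed
qed

lemma Hcl_MM0: "Hcl MM 0 = {0}"
  using Rcl_MM0 by (auto simp: Hcl_def Rcl_def Lcl_def)

lemma res_finite_group_triv: "(\<forall>x\<in>carrier G. \<forall>y\<in>carrier G. x = y) \<Longrightarrow> res_finite_group G"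
  by (simp add: res_finite_group_def)

lemma schutz0: "res_finite_group (Schutz MM (Hcl MM 0))"
proof -
  have st: "Stab MM {0} = {0}" by (auto simp: Stab_def)
  show ?thesis
    by (rule res_finite_group_triv) (auto simp: Hcl_MM0 Schutz_def st quotient_def)
qed

lemma mulH: "h \<in> HH i l \<Longrightarrow> s \<in> SS l \<Longrightarrow> mul h s = enc i ((fg h + vv l s) mod 2) l"
proof -
  assume h: "h \<in> HH i l" and s: "s \<in> SS l"
  show ?thesis
  proof (cases "s = 0")
    case True then show ?thesis using h enc_surj[of h] by (auto simp: HH_def vv_def)
  next
    case False
    then have "s > 0" "fl s = l" using s by (auto simp: SS_def)
    moreover have "(fg h + fg s + ind (l = fi s)) mod 2 = (fg h + (fg s + ind (l = fi s)) mod 2) mod 2"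
      by (simp add: mod_add_right_eq add.assoc)
    ultimately show ?thesis using h False by (auto simp: HH_def vv_def mul_pos_pos)
  qed
qed

lemma Stab_HH: "Stab MM (HH i l) = SS l"
proof (intro equalityI subsetI)
  fix s assume s: "s \<in> Stab MM (HH i l)"
  have e: "enc i 0 l \<in> HH i l" by (simp add: HH_def)
  then have "mul (enc i 0 l) s \<in> HH i l" using s by (auto simp: Stab_def)
  then show "s \<in> SS l"
    by (cases "s = 0") (auto simp: SS_def HH_def fl_mul)
next
  fix s assume s: "s \<in> SS l"
  have "(\<lambda>h. mul h s) ` HH i l = HH i l"
  proof (intro equalityI subsetI)
    fix z assume "z \<in> (\<lambda>h. mul h s) ` HH i l"
    then show "z \<in> HH i l" using s by (auto simp: mulH HH_def)
  next
    fix z assume z: "z \<in> HH i l"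
    define h where "h = enc i ((fg z + vv l s) mod 2) l"
    have hH: "h \<in> HH i l" by (simp add: h_def HH_def)
    have "((fg z + vv l s) mod 2 + vv l s) mod 2 = fg z"
      using fg_lt[of z] vv_lt[of l s] by (auto simp: less_2_cases_iff)
    then have "mul h s = z" using mulH[OF hH s] z enc_surj[of z] by (auto simp: h_def HH_def)
    then show "z \<in> (\<lambda>h. mul h s) ` HH i l" using hH by force
  qed
  then show "s \<in> Stab MM (HH i l)" by (simp add: Stab_def)
qed

lemma sigma_HH: "(a, b) \<in> sigmaH MM (HH i l) \<longleftrightarrow> a \<in> SS l \<and> b \<in> SS l \<and> vv l a = vv l b"
proof
  assume ab: "(a, b) \<in> sigmaH MM (HH i l)"
  then have st: "a \<in> SS l" "b \<in> SS l" by (auto simp: sigmaH_def Stab_HH)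
  have e: "enc i 0 l \<in> HH i l" by (simp add: HH_def)
  then have "mul (enc i 0 l) a = mul (enc i 0 l) b" using ab by (auto simp: sigmaH_def)
  then have "enc i (vv l a) l = enc i (vv l b) l" using mulH[OF e st(1)] mulH[OF e st(2)] by simp
  then show "a \<in> SS l \<and> b \<in> SS l \<and> vv l a = vv l b" using st by (simp add: enc_eq_iff)
next
  assume "a \<in> SS l \<and> b \<in> SS l \<and> vv l a = vv l b"
  then show "(a, b) \<in> sigmaH MM (HH i l)" by (auto simp: sigmaH_def Stab_HH mulH)
qed

lemma vv_mul: "a \<in> SS l \<Longrightarrow> b \<in> SS l \<Longrightarrow> mul a b \<in> SS l \<and> vv l (mul a b) = (vv l a + vv l b) mod 2"
proof -
  assume a: "a \<in> SS l" and b: "b \<in> SS l"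
  show ?thesis
  proof (cases "a = 0 \<or> b = 0")
    case True then show ?thesis using a b vv_lt[of l a] vv_lt[of l b] by (auto simp: vv_def)
  next
    case False
    then have p: "a > 0" "b > 0" "fl a = l" "fl b = l" using a b by (auto simp: SS_def)
    have m: "mul a b > 0" using p by (simp add: mul_gt0)
    have "vv l (mul a b) = ((fg a + fg b + ind (l = fi b)) mod 2 + ind (l = fi a)) mod 2"
      using p m by (simp add: vv_def fg_mul fi_mul)
    also have "\<dots> = (fg a + fg b + ind (l = fi b) + ind (l = fi a)) mod 2" by (simp add: mod_add_left_eq)
    also have "\<dots> = ((fg a + ind (l = fi a)) mod 2 + (fg b + ind (l = fi b)) mod 2) mod 2"
      by (simp add: mod_add_eq add_ac)
    also have "\<dots> = (vv l a + vv l b) mod 2" using p by (simp add: vv_def)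
    finally have "vv l (mul a b) = (vv l a + vv l b) mod 2" .
    moreover have "mul a b \<in> SS l" using p m by (simp add: SS_def fl_mul)
    ultimately show ?thesis by simp
  qed
qed

definition Z2 :: "nat monoid" where "Z2 = \<lparr>carrier = {0, 1}, mult = (\<lambda>a b. (a + b) mod 2), one = 0\<rparr>"

lemma group_Z2: "group Z2"
  by (rule groupI) (auto simp: Z2_def)

lemma cls_sigma: "a \<in> SS l \<Longrightarrow> sigmaH MM (HH i l) `` {a} = cls l a"
  by (auto simp: sigma_HH cls_def)

lemma schutz_pos: "res_finite_group (Schutz MM (HH i l))"
proof -
  let ?G = "Schutz MM (HH i l)"
  let ?r = "sigmaH MM (HH i l)"
  have car: "carrier ?G = SS l // ?r" by (simp add: Schutz_def Stab_HH)
  have clsE: "\<exists>a\<in>SS l. C = cls l a" if "C \<in> carrier ?G" for C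
    using that unfolding car by (auto elim!: quotientE simp: cls_sigma)
  define hv where "hv C = vv l (SOME b. b \<in> C)" for C
  have some_cls: "(SOME b. b \<in> cls l a) \<in> SS l \<and> vv l (SOME b. b \<in> cls l a) = vv l a" if "a \<in> SS l" for a
  proof -
    have "a \<in> cls l a" using that by (simp add: cls_def)
    then have "(SOME b. b \<in> cls l a) \<in> cls l a" by (rule someI)
    then show ?thesis by (simp add: cls_def)
  qed
  have hv_cls: "hv (cls l a) = vv l a" if "a \<in> SS l" for a
    using some_cls[OF that] by (simp add: hv_def)
  have hom: "hv \<in> hom ?G Z2"
  proof (unfold hom_def, intro CollectI conjI ballI Pi_I)
    fix C assume "C \<in> carrier ?G"
    show "hv C \<in> carrier Z2" using vv_lt by (auto simp: Z2_def hv_def less_2_cases_iff)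
  next
    fix A B assume A: "A \<in> carrier ?G" and B: "B \<in> carrier ?G"
    obtain a where a: "a \<in> SS l" "A = cls l a" using clsE[OF A] by blast
    obtain b where b: "b \<in> SS l" "B = cls l b" using clsE[OF B] by blast
    define a' where "a' = (SOME x. x \<in> A)"
    define b' where "b' = (SOME x. x \<in> B)"
    have a': "a' \<in> SS l" "vv l a' = vv l a" using some_cls[OF a(1)] a(2) by (auto simp: a'_def)
    have b': "b' \<in> SS l" "vv l b' = vv l b" using some_cls[OF b(1)] b(2) by (auto simp: b'_def)
    have p: "mul a' b' \<in> SS l" "vv l (mul a' b') = (vv l a + vv l b) mod 2"
      using vv_mul[OF a'(1) b'(1)] a' b' by auto
    have "A \<otimes>\<^bsub>?G\<^esub> B = ?r `` {mul a' b'}" by (simp add: Schutz_def a'_def b'_def)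
    also have "\<dots> = cls l (mul a' b')" using p(1) by (rule cls_sigma)
    finally have "hv (A \<otimes>\<^bsub>?G\<^esub> B) = (vv l a + vv l b) mod 2" using hv_cls[OF p(1)] p(2) by simp
    then show "hv (A \<otimes>\<^bsub>?G\<^esub> B) = hv A \<otimes>\<^bsub>Z2\<^esub> hv B"
      using hv_cls a b by (simp add: Z2_def)
  qed
  show ?thesis
    unfolding res_finite_group_def
  proof (intro ballI impI)
    fix A B assume A: "A \<in> carrier ?G" and B: "B \<in> carrier ?G" and ne: "A \<noteq> B"
    obtain a where a: "a \<in> SS l" "A = cls l a" using clsE[OF A] by blast
    obtain b where b: "b \<in> SS l" "B = cls l b" using clsE[OF B] by blast
    have "hv A \<noteq> hv B"
    proof
      assume "hv A = hv B"
      then have "vv l a = vv l b" using hv_cls a b by simp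
      then have "A = B" using a b by (simp add: cls_def)
      then show False using ne by simp
    qed
    then show "\<exists>(K :: nat monoid) h. group K \<and> finite (carrier K) \<and> h \<in> hom ?G K \<and> h A \<noteq> h B"
      using group_Z2 hom by (intro exI[of _ Z2] exI[of _ hv]) (auto simp: Z2_def)
  qed
qed

lemma schutz_all: "\<forall>x\<in>carrier MM. res_finite_group (Schutz MM (Hcl MM x))"
proof
  fix x :: nat
  show "res_finite_group (Schutz MM (Hcl MM x))"
  proof (cases "x = 0")
    case True then show ?thesis using schutz0 by simp
  next
    case False
    then have "Hcl MM x = HH (fi x) (fl x)" by (simp add: Hcl_MM)
    then show ?thesis using schutz_pos by simp
  qed
qed

theorem mainTheorem7:
  shows "\<exists>M :: nat monoid. monoid M \<and> regular_monoid M \<and>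
     (\<forall>x\<in>carrier M. res_finite_group (Schutz M (Hcl M x))) \<and>
     res_finite_right_action M (Lcl M ` carrier M) (Lact M) \<and>
     res_finite_left_action M (Rcl M ` carrier M) (Ract M) \<and>
     \<not> res_finite_monoid M"
  proof (rule exI[of _ MM], intro conjI)
  show "monoid MM" by (rule monoid_MM)
  show "regular_monoid MM" by (rule regular_MM)
  show "\<forall>x\<in>carrier MM. res_finite_group (Schutz MM (Hcl MM x))" by (rule schutz_all)
  show "res_finite_right_action MM (Lcl MM ` carrier MM) (Lact MM)" by (rule right_MM)
  show "res_finite_left_action MM (Rcl MM ` carrier MM) (Ract MM)" by (rule left_MM)
  show "\<not> res_finite_monoid MM" by (rule not_rf_MM)
qed

end
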